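(* Let $f:D'^X\to\mathbb{R}$ be a function and let $(G,c)$ be a $k$-submodular $(X,k)$-network that represents $f$. Then an assignment $\phi:X\to D'$ is an extreme minimum solution of $f$ if and only if its corresponding cut $S_\phi$ is an extreme minimum cut.
   Context: $D=\{1,\dots,k\}$, $D'=\{0\}\cup D$. For $v\in X$ let $X_v=\{v_i:i\in D\}$. An $(X,k)$-network is a directed network with nonnegative capacities $c$ on the vertex set $\bigcup_{v\in X}X_v\cup\{s,t\}$; an $s$-$t$ cut is a vertex set $S$ with $s\in S$, $t\notin S$, of capacity $c(S)$ = total capacity of edges leaving $S$. For $\phi:X\to D'$, $S_\phi=\{s\}\cup\{v_{\phi(v)}:v\in X,\phi(v)\ne0\}$. An $s$-$t$ cut is normalised if it contains at most one vertex of each $X_v$. For an $s$-$t$ cut $S$, $\nu(S)=\{s\}\cup\{v_i: v\in X, S\cap X_v=\{v_i\}\}$. The network represents $f$ if $c(S_\phi)=f(\phi)$ for every $\phi$, and is $k$-submodular if $c(S)\ge c(\nu(S))$ for every $s$-$t$ cut $S$. A minimum solution $x$ of $f$ is dominated by a minimum solution $y$ if $x\ne y$ and $x_i\ne0\Rightarrow x_i=y_i$ for all $i$; it is extreme if not dominated. A normalised minimum cut $S$ is dominated by a normalised minimum cut $S'$ if $S\subsetneq S'$; it is an extreme minimum cut if not dominated. *)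

theory Defs
  imports Complex_Main
begin

text \<open>Vertices of an (X,k)-network: source s, sink t, and v_i for v in X, i in D = {1..k}.
  The ground set X is the (finite) universe of the type 'x.\<close>
datatype 'x vertex = Src | Tgt | Node 'x nat

definition Dset :: "nat \<Rightarrow> nat set" where
  "Dset k = {1..k}"

definition Dset' :: "nat \<Rightarrow> nat set" where
  "Dset' k = {0..k}"

definition Xv :: "nat \<Rightarrow> 'x \<Rightarrow> 'x vertex set" where
  "Xv k v = {Node v i | i. i \<in> Dset k}"

definition vertices :: "nat \<Rightarrow> 'x vertex set" where
  "vertices k = (\<Union>v. Xv k v) \<union> {Src, Tgt}"

definition capacities :: "nat \<Rightarrow> ('x vertex \<Rightarrow> 'x vertex \<Rightarrow> real) \<Rightarrow> bool" where
  "capacities k c \<longleftrightarrow> (\<forall>u\<in>vertices k. \<forall>w\<in>vertices k. c u w \<ge> 0)"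

definition st_cut :: "nat \<Rightarrow> 'x vertex set \<Rightarrow> bool" where
  "st_cut k S \<longleftrightarrow> S \<subseteq> vertices k \<and> Src \<in> S \<and> Tgt \<notin> S"

definition cut_cap :: "nat \<Rightarrow> ('x vertex \<Rightarrow> 'x vertex \<Rightarrow> real) \<Rightarrow> 'x vertex set \<Rightarrow> real" where
  "cut_cap k c S = (\<Sum>u\<in>S. \<Sum>w\<in>vertices k - S. c u w)"

definition assignment :: "nat \<Rightarrow> ('x \<Rightarrow> nat) \<Rightarrow> bool" where
  "assignment k \<phi> \<longleftrightarrow> (\<forall>v. \<phi> v \<in> Dset' k)"

definition S_of :: "('x \<Rightarrow> nat) \<Rightarrow> 'x vertex set" where
  "S_of \<phi> = {Src} \<union> {Node v (\<phi> v) | v. \<phi> v \<noteq> 0}"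

definition normalised :: "nat \<Rightarrow> 'x vertex set \<Rightarrow> bool" where
  "normalised k S \<longleftrightarrow> st_cut k S \<and> (\<forall>v. card (S \<inter> Xv k v) \<le> 1)"

definition nu :: "nat \<Rightarrow> 'x vertex set \<Rightarrow> 'x vertex set" where
  "nu k S = {Src} \<union> {Node v i | v i. S \<inter> Xv k v = {Node v i}}"

definition represents :: "nat \<Rightarrow> ('x vertex \<Rightarrow> 'x vertex \<Rightarrow> real) \<Rightarrow> (('x \<Rightarrow> nat) \<Rightarrow> real) \<Rightarrow> bool" where
  "represents k c f \<longleftrightarrow> (\<forall>\<phi>. assignment k \<phi> \<longrightarrow> cut_cap k c (S_of \<phi>) = f \<phi>)"

definition k_submodular_network :: "nat \<Rightarrow> ('x vertex \<Rightarrow> 'x vertex \<Rightarrow> real) \<Rightarrow> bool" where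
  "k_submodular_network k c \<longleftrightarrow>
     (\<forall>S. st_cut k S \<longrightarrow> cut_cap k c S \<ge> cut_cap k c (nu k S))"

definition min_solution :: "nat \<Rightarrow> (('x \<Rightarrow> nat) \<Rightarrow> real) \<Rightarrow> ('x \<Rightarrow> nat) \<Rightarrow> bool" where
  "min_solution k f x \<longleftrightarrow> assignment k x \<and> (\<forall>y. assignment k y \<longrightarrow> f x \<le> f y)"

definition dominates_sol :: "('x \<Rightarrow> nat) \<Rightarrow> ('x \<Rightarrow> nat) \<Rightarrow> bool" where
  "dominates_sol y x \<longleftrightarrow> x \<noteq> y \<and> (\<forall>i. x i \<noteq> 0 \<longrightarrow> x i = y i)"

definition extreme_min_solution :: "nat \<Rightarrow> (('x \<Rightarrow> nat) \<Rightarrow> real) \<Rightarrow> ('x \<Rightarrow> nat) \<Rightarrow> bool" where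
  "extreme_min_solution k f x \<longleftrightarrow> min_solution k f x \<and>
     \<not> (\<exists>y. min_solution k f y \<and> dominates_sol y x)"

definition min_cut :: "nat \<Rightarrow> ('x vertex \<Rightarrow> 'x vertex \<Rightarrow> real) \<Rightarrow> 'x vertex set \<Rightarrow> bool" where
  "min_cut k c S \<longleftrightarrow> st_cut k S \<and> (\<forall>T. st_cut k T \<longrightarrow> cut_cap k c S \<le> cut_cap k c T)"

definition normalised_min_cut :: "nat \<Rightarrow> ('x vertex \<Rightarrow> 'x vertex \<Rightarrow> real) \<Rightarrow> 'x vertex set \<Rightarrow> bool" where
  "normalised_min_cut k c S \<longleftrightarrow> normalised k S \<and> min_cut k c S"

definition extreme_min_cut :: "nat \<Rightarrow> ('x vertex \<Rightarrow> 'x vertex \<Rightarrow> real) \<Rightarrow> 'x vertex set \<Rightarrow> bool" where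
  "extreme_min_cut k c S \<longleftrightarrow> normalised_min_cut k c S \<and>
     \<not> (\<exists>S'. normalised_min_cut k c S' \<and> S \<subset> S')"

end

theory Submission
  imports Defs
begin

definition psi :: "nat \<Rightarrow> 'x vertex set \<Rightarrow> 'x \<Rightarrow> nat" where
  "psi k S v = (if \<exists>i. S \<inter> Xv k v = {Node v i} then (THE i. S \<inter> Xv k v = {Node v i}) else 0)"

lemma psi_eq: "S \<inter> Xv k v = {Node v i} \<Longrightarrow> psi k S v = i"
  unfolding psi_def by auto

lemma psi_zero: "\<not>(\<exists>i. S \<inter> Xv k v = {Node v i}) \<Longrightarrow> psi k S v = 0"
  unfolding psi_def by (simp only: if_False)

lemma single_in_D: "S \<inter> Xv k v = {Node v i} \<Longrightarrow> i \<in> Dset k"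
proof -
  assume "S \<inter> Xv k v = {Node v i}"
  then have "Node v i \<in> Xv k v" by blast
  then show ?thesis unfolding Xv_def by simp
qed

lemma nu_S_of: "nu k S = S_of (psi k S)"
proof -
  have "{Node v i |v i. S \<inter> Xv k v = {Node v i}} = {Node v (psi k S v) |v. psi k S v \<noteq> 0}"
  proof (rule set_eqI, rule iffI)
    fix x assume "x \<in> {Node v i |v i. S \<inter> Xv k v = {Node v i}}"
    then have "\<exists>v i. x = Node v i \<and> S \<inter> Xv k v = {Node v i}" by (simp only: mem_Collect_eq)
    then obtain v i where h: "x = Node v i \<and> S \<inter> Xv k v = {Node v i}" by iprover
    have h1: "x = Node v i" using h by (rule conjunct1)
    have h2: "S \<inter> Xv k v = {Node v i}" using h by (rule conjunct2)
    have p: "psi k S v = i" by (rule psi_eq[OF h2])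
    have "i \<in> Dset k" by (rule single_in_D[OF h2])
    then have i0: "i \<noteq> 0" unfolding Dset_def by simp
    show "x \<in> {Node v (psi k S v) |v. psi k S v \<noteq> 0}"
      unfolding mem_Collect_eq
    proof (intro exI conjI)
      show "x = Node v (psi k S v)" using h1 p by simp
      show "psi k S v \<noteq> 0" using p i0 by simp
    qed
  next
    fix x assume "x \<in> {Node v (psi k S v) |v. psi k S v \<noteq> 0}"
    then have "\<exists>v. x = Node v (psi k S v) \<and> psi k S v \<noteq> 0" by (simp only: mem_Collect_eq)
    then obtain v where h: "x = Node v (psi k S v) \<and> psi k S v \<noteq> 0" by iprover
    have h1: "x = Node v (psi k S v)" using h by (rule conjunct1)
    have h2: "psi k S v \<noteq> 0" using h by (rule conjunct2)
    have "\<exists>i. S \<inter> Xv k v = {Node v i}" 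
    proof (rule ccontr)
      assume "\<not> (\<exists>i. S \<inter> Xv k v = {Node v i})"
      then have "psi k S v = 0" by (rule psi_zero)
      with h2 show False by simp
    qed
    then obtain i where i: "S \<inter> Xv k v = {Node v i}" by iprover
    have xi: "x = Node v i" using h1 psi_eq[OF i] by simp
    show "x \<in> {Node v i |v i. S \<inter> Xv k v = {Node v i}}"
      unfolding mem_Collect_eq
    proof (intro exI conjI)
      show "x = Node v i" by (rule xi)
      show "S \<inter> Xv k v = {Node v i}" by (rule i)
    qed
  qed
  then show ?thesis unfolding nu_def S_of_def by (rule arg_cong)
qed

lemma psi_assignment: "assignment k (psi k S)"
  unfolding assignment_def
proof
  fix v show "psi k S v \<in> Dset' k"
  proof (cases "\<exists>i. S \<inter> Xv k v = {Node v i}")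
    case True
    then obtain i where i: "S \<inter> Xv k v = {Node v i}" by iprover
    have "i \<in> Dset k" by (rule single_in_D[OF i])
    then have "i \<in> Dset' k" unfolding Dset_def Dset'_def by simp
    then show ?thesis using psi_eq[OF i] by simp
  next
    case False
    then have "psi k S v = 0" by (rule psi_zero)
    then show ?thesis unfolding Dset'_def by simp
  qed
qed

lemma S_of_st_cut: "assignment k \<phi> \<Longrightarrow> st_cut k (S_of \<phi>)"
proof -
  assume a: "assignment k \<phi>"
  have sub: "S_of \<phi> \<subseteq> vertices k"
  proof
    fix x assume "x \<in> S_of \<phi>"
    then have "x = Src \<or> (\<exists>v. x = Node v (\<phi> v) \<and> \<phi> v \<noteq> 0)" unfolding S_of_def by simp
    then show "x \<in> vertices k"
    proof
      assume "x = Src" then show ?thesis unfolding vertices_def by simp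
    next
      assume "\<exists>v. x = Node v (\<phi> v) \<and> \<phi> v \<noteq> 0"
      then obtain v where v: "x = Node v (\<phi> v)" "\<phi> v \<noteq> 0" by iprover
      have "\<phi> v \<in> Dset' k" using a unfolding assignment_def by simp
      then have "\<phi> v \<in> Dset k" using v(2) unfolding Dset_def Dset'_def by simp
      then have "x \<in> Xv k v" unfolding Xv_def v(1) by blast
      then show ?thesis unfolding vertices_def by blast
    qed
  qed
  have "Src \<in> S_of \<phi>" unfolding S_of_def by simp
  moreover have "Tgt \<notin> S_of \<phi>" unfolding S_of_def by simp
  ultimately show ?thesis unfolding st_cut_def using sub by simp
qed

lemma S_of_normalised: "assignment k \<phi> \<Longrightarrow> normalised k (S_of \<phi>)"
proof -
  assume a: "assignment k \<phi>"
  have C: "card (S_of \<phi> \<inter> Xv k v) \<le> 1" for v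
  proof -
    have "S_of \<phi> \<inter> Xv k v \<subseteq> {Node v (\<phi> v)}"
      unfolding S_of_def Xv_def by auto
    then have "card (S_of \<phi> \<inter> Xv k v) \<le> card {Node v (\<phi> v)}"
      by (rule card_mono[rotated]) simp
    then show ?thesis by simp
  qed
  show ?thesis unfolding normalised_def using S_of_st_cut[OF a] C by blast
qed

lemma finite_Xv: "finite (Xv k v)"
proof -
  have "Xv k v = (\<lambda>i. Node v i) ` Dset k" unfolding Xv_def by auto
  then show ?thesis by (simp add: Dset_def)
qed

lemma normalised_nu: "normalised k S \<Longrightarrow> nu k S = S"
proof -
  assume n: "normalised k S"
  then have st: "S \<subseteq> vertices k" "Src \<in> S" "Tgt \<notin> S" and c: "\<And>v. card (S \<inter> Xv k v) \<le> 1"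
    unfolding normalised_def st_cut_def by auto
  show ?thesis
  proof (rule set_eqI, rule iffI)
    fix x assume "x \<in> nu k S" then show "x \<in> S" using st unfolding nu_def by auto
  next
    fix x assume x: "x \<in> S"
    show "x \<in> nu k S"
    proof (cases "x = Src")
      case False
      then obtain v where xv: "x \<in> Xv k v" using x st unfolding vertices_def by auto
      then obtain i where xi: "x = Node v i" unfolding Xv_def by auto
      have fin: "finite (S \<inter> Xv k v)" using finite_Xv[of k v] by simp
      have "x \<in> S \<inter> Xv k v" using x xv by auto
      with c[of v] fin have "S \<inter> Xv k v = {x}"
        using card_le_Suc0_iff_eq[OF fin] by auto
      then show ?thesis unfolding nu_def using xi by auto
    qed (simp add: nu_def)
  qed
qed

lemma normalised_is_S_of: "normalised k S \<Longrightarrow> S = S_of (psi k S)"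
  using normalised_nu[of k S] nu_S_of[of k S] by simp

lemma nu_st_cut: "st_cut k (nu k S)"
  unfolding nu_S_of by (rule S_of_st_cut[OF psi_assignment])

lemma S_of_sub: "S_of x \<subseteq> S_of y \<longleftrightarrow> (\<forall>i. x i \<noteq> 0 \<longrightarrow> x i = y i)"
  unfolding S_of_def by auto

lemma S_of_inj: "S_of x = S_of y \<Longrightarrow> x = y"
proof -
  assume e: "S_of x = S_of y"
  then have "S_of x \<subseteq> S_of y" by simp
  then have A: "\<forall>i. x i \<noteq> 0 \<longrightarrow> x i = y i" by (simp only: S_of_sub)
  from e have "S_of y \<subseteq> S_of x" by simp
  then have B: "\<forall>i. y i \<noteq> 0 \<longrightarrow> y i = x i" by (simp only: S_of_sub)
  show "x = y"
  proof
    fix v show "x v = y v"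
    proof (cases "x v = 0")
      case True
      show ?thesis
      proof (cases "y v = 0")
        case True then show ?thesis using \<open>x v = 0\<close> by simp
      next
        case False then show ?thesis using B by simp
      qed
    next
      case False then show ?thesis using A by simp
    qed
  qed
qed

lemma dom_iff: "dominates_sol y x \<longleftrightarrow> S_of x \<subset> S_of y"
proof -
  have ne: "x \<noteq> y \<longleftrightarrow> S_of x \<noteq> S_of y"
  proof
    assume "x \<noteq> y" then show "S_of x \<noteq> S_of y" using S_of_inj by auto
  next
    assume "S_of x \<noteq> S_of y" then show "x \<noteq> y" by auto
  qed
  have "dominates_sol y x \<longleftrightarrow> (S_of x \<noteq> S_of y \<and> S_of x \<subseteq> S_of y)"
    unfolding dominates_sol_def ne S_of_sub by (rule refl)
  also have "\<dots> \<longleftrightarrow> S_of x \<subset> S_of y" by auto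
  finally show ?thesis .
qed

lemma min_iff:
  fixes c :: "'x vertex \<Rightarrow> 'x vertex \<Rightarrow> real" and f :: "('x \<Rightarrow> nat) \<Rightarrow> real"
  assumes sub: "k_submodular_network k c" and rep: "represents k c f" and a: "assignment k \<phi>"
  shows "min_solution k f \<phi> \<longleftrightarrow> min_cut k c (S_of \<phi>)"
proof -
  have R: "cut_cap k c (S_of y) = f y" if "assignment k y" for y
    using rep that unfolding represents_def by blast
  show ?thesis
  proof
    assume m: "min_solution k f \<phi>"
    have M: "f \<phi> \<le> f y" if "assignment k y" for y
      using m that unfolding min_solution_def by blast
    have C: "cut_cap k c (S_of \<phi>) \<le> cut_cap k c T" if T: "st_cut k T" for T :: "'x vertex set"
    proof -
      have 1: "cut_cap k c (nu k T) \<le> cut_cap k c T"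
        using sub T unfolding k_submodular_network_def by blast
      have 2: "cut_cap k c (nu k T) = f (psi k T)"
        unfolding nu_S_of by (rule R[OF psi_assignment])
      have 3: "f \<phi> \<le> f (psi k T)" by (rule M[OF psi_assignment])
      have 4: "cut_cap k c (S_of \<phi>) = f \<phi>" by (rule R[OF a])
      from 1 2 3 4 show ?thesis by linarith
    qed
    show "min_cut k c (S_of \<phi>)" unfolding min_cut_def
      using S_of_st_cut[OF a] C by blast
  next
    assume m: "min_cut k c (S_of \<phi>)"
    have "f \<phi> \<le> f y" if ay: "assignment k y" for y
    proof -
      have "cut_cap k c (S_of \<phi>) \<le> cut_cap k c (S_of y)"
        using m S_of_st_cut[OF ay] unfolding min_cut_def by blast
      then show ?thesis using R[OF a] R[OF ay] by simp
    qed
    then show "min_solution k f \<phi>" using a unfolding min_solution_def by blast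
  qed
qed

theorem lemma17:
  fixes k :: nat
    and f :: "('x::finite \<Rightarrow> nat) \<Rightarrow> real"
    and c :: "'x vertex \<Rightarrow> 'x vertex \<Rightarrow> real"
    and \<phi> :: "'x \<Rightarrow> nat"
  assumes "k \<ge> 1"
    and "capacities k c"
    and "k_submodular_network k c"
    and "represents k c f"
    and "assignment k \<phi>"
  shows "extreme_min_solution k f \<phi> \<longleftrightarrow> extreme_min_cut k c (S_of \<phi>)"
proof -
  note mi = min_iff[OF assms(3) assms(4)]
  have A: "min_solution k f \<phi> \<longleftrightarrow> normalised_min_cut k c (S_of \<phi>)"
    using mi[OF assms(5)] S_of_normalised[OF assms(5)] unfolding normalised_min_cut_def by simp
  have B: "(\<exists>y. min_solution k f y \<and> dominates_sol y \<phi>) \<longleftrightarrow>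
           (\<exists>S'. normalised_min_cut k c S' \<and> S_of \<phi> \<subset> S')"
  proof
    assume "\<exists>y. min_solution k f y \<and> dominates_sol y \<phi>"
    then obtain y where y: "min_solution k f y" "dominates_sol y \<phi>" by blast
    have ay: "assignment k y" using y(1) unfolding min_solution_def by (rule conjunct1)
    show "\<exists>S'. normalised_min_cut k c S' \<and> S_of \<phi> \<subset> S'"
    proof (intro exI conjI)
      have "min_cut k c (S_of y)" using mi[OF ay] y(1) by (rule iffD1)
      then show "normalised_min_cut k c (S_of y)" unfolding normalised_min_cut_def
        using S_of_normalised[OF ay] by (intro conjI)
      show "S_of \<phi> \<subset> S_of y" using dom_iff y(2) by (rule iffD1)
    qed
  next
    assume "\<exists>S'. normalised_min_cut k c S' \<and> S_of \<phi> \<subset> S'"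
    then obtain S' where S': "normalised_min_cut k c S'" "S_of \<phi> \<subset> S'" by blast
    define y where "y = psi k S'"
    have ay: "assignment k y" unfolding y_def by (rule psi_assignment)
    have nS: "normalised k S'" using S'(1) unfolding normalised_min_cut_def by (rule conjunct1)
    have eq: "S' = S_of y" unfolding y_def by (rule normalised_is_S_of[OF nS])
    show "\<exists>y. min_solution k f y \<and> dominates_sol y \<phi>"
    proof (intro exI conjI)
      have "min_cut k c S'" using S'(1) unfolding normalised_min_cut_def by (rule conjunct2)
      then have "min_cut k c (S_of y)" using eq by simp
      with mi[OF ay] show "min_solution k f y" by (rule iffD2)
      have "S_of \<phi> \<subset> S_of y" using S'(2) eq by simp
      with dom_iff show "dominates_sol y \<phi>" by (rule iffD2)
    qed
  qed
  show ?thesis unfolding extreme_min_solution_def extreme_min_cut_def using A B by blast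
qed

end
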